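(* Let $m\ge2$, let $n\ge2$ be even, and $\epsilon\in\mathbb R$. Consider $2n$ parties on a ring (indices mod $2n$), each party $j$ holding values $M^{(j)}_0,\dots,M^{(j)}_{m-1}\in\{\pm1\}$. Define $$I^{(2n)}_{\mathrm{chain}}(\epsilon):=\sum_{j=0}^{2n-1}\big(1+(-1)^j\epsilon\big)\,I_{\mathrm{chain}}\big(M^{(j)},M^{(j+1)}\big).$$ Then $\min I^{(2n)}_{\mathrm{chain}}(\epsilon)=-4n(m-1)\max\{1,|\epsilon|\}$, the minimum being over all assignments of $\pm1$ values to all $M^{(j)}_k$.
   Context: For vectors $A=(A_0,\dots,A_{m-1})$, $B=(B_0,\dots,B_{m-1})\in\{\pm1\}^m$ the chained Bell expression is $I_{\mathrm{chain}}(A,B):=\sum_{i=0}^{m-1}\big(A_{m-i-2}B_i+A_{m-i-1}B_i\big)$, with the convention $A_{-1}:=-A_{m-1}$ (so for $m=2$ it is the CHSH expression $A_0B_0+A_0B_1+A_1B_0-A_1B_1$). In $I_{\mathrm{chain}}(M^{(j)},M^{(j+1)})$ party $j$ plays the role of $A$ and party $j+1$ the role of $B$. *)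

theory Defs
  imports Complex_Main
begin

definition Aidx :: "nat \<Rightarrow> (nat \<Rightarrow> real) \<Rightarrow> int \<Rightarrow> real" where
  "Aidx m A k = (if k = -1 then - A (m - 1) else A (nat k))"

definition I_chain :: "nat \<Rightarrow> (nat \<Rightarrow> real) \<Rightarrow> (nat \<Rightarrow> real) \<Rightarrow> real" where
  "I_chain m A B = (\<Sum>i<m. Aidx m A (int m - int i - 2) * B i
                          + Aidx m A (int m - int i - 1) * B i)"

definition I_chain_ring :: "nat \<Rightarrow> nat \<Rightarrow> real \<Rightarrow> (nat \<Rightarrow> nat \<Rightarrow> real) \<Rightarrow> real" where
  "I_chain_ring m n \<epsilon> M =
     (\<Sum>j<2*n. (1 + (-1)^j * \<epsilon>) * I_chain m (M j) (M ((j + 1) mod (2*n))))"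

definition pm1_assignment :: "nat \<Rightarrow> nat \<Rightarrow> (nat \<Rightarrow> nat \<Rightarrow> real) \<Rightarrow> bool" where
  "pm1_assignment m n M \<longleftrightarrow> (\<forall>j<2*n. \<forall>k<m. M j k \<in> {-1, 1})"

end

theory Submission
  imports Defs "HOL-Library.FuncSet"
begin

lemma chain_abs:
  assumes m1: "m \<ge> 1" and hA: "\<forall>k<m. A k \<in> {-1,1}" and hB: "\<forall>k<m. B k \<in> {-1,1}"
  shows "\<bar>I_chain m A B\<bar> \<le> 2*(real m - 1)"
proof -
  define x where "x i = Aidx m A (int m - 1 - int i)" for i
  have I: "I_chain m A B = (\<Sum>i<m. (x (Suc i) + x i) * B i)"
    unfolding I_chain_def x_def by (rule sum.cong) (auto simp: algebra_simps)
  have xlt: "x i = A (m - 1 - i)" if "i < m" for i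
    using that unfolding x_def Aidx_def by (auto simp: nat_diff_distrib)
  have xm: "x m = - A (m - 1)" unfolding x_def Aidx_def by simp
  have x0: "x 0 = A (m - 1)" using xlt[of 0] m1 by simp
  have xpm: "x i \<in> {-1,1}" if "i \<le> m" for i
  proof (cases "i < m")
    case True then show ?thesis using xlt hA by auto
  next
    case False then have "i = m" using that by simp
    then show ?thesis using xm hA[rule_format, of "m-1"] m1 by auto
  qed
  have ex: "\<exists>i<m. x (Suc i) + x i = 0"
  proof (rule ccontr)
    assume na: "\<not> ?thesis"
    have eq: "x (Suc i) = x i" if "i < m" for i
    proof -
      have ne: "x (Suc i) + x i \<noteq> 0" using na that by blast
      have "x i \<in> {-1,1}" "x (Suc i) \<in> {-1,1}" using xpm[of i] xpm[of "Suc i"] that by simp_all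
      then show ?thesis using ne by auto
    qed
    have "i \<le> m \<Longrightarrow> x i = x 0" for i
    proof (induction i)
      case (Suc i) then show ?case using eq[of i] by simp
    qed simp
    then have "x m = x 0" using order_refl by blast
    then have "x 0 = 0" using xm x0 by simp
    then show False using xpm[of 0] by simp
  qed
  then obtain i0 where i0: "i0 < m" "x (Suc i0) + x i0 = 0" by blast
  have "\<bar>I_chain m A B\<bar> \<le> (\<Sum>i<m. \<bar>(x (Suc i) + x i) * B i\<bar>)"
    unfolding I by (rule sum_abs)
  also have "\<dots> = (\<Sum>i<m. \<bar>x (Suc i) + x i\<bar>)"
    by (rule sum.cong) (use hB in \<open>auto simp: abs_mult\<close>)
  also have "\<dots> = \<bar>x (Suc i0) + x i0\<bar> + (\<Sum>i\<in>{..<m}-{i0}. \<bar>x (Suc i) + x i\<bar>)"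
    using i0 by (simp add: sum.remove)
  also have "\<dots> \<le> 0 + (\<Sum>i\<in>{..<m}-{i0}. 2)"
    using i0 
  proof (intro add_mono sum_mono)
    fix i assume "i \<in> {..<m} - {i0}"
    then have "x i \<in> {-1,1}" "x (Suc i) \<in> {-1,1}" using xpm[of i] xpm[of "Suc i"] by auto
    then show "\<bar>x (Suc i) + x i\<bar> \<le> 2" by auto
  qed (use i0 in simp)
  also have "\<dots> = 2*(real m - 1)" using i0 by (simp add: of_nat_diff)
  finally show ?thesis .
qed

lemma chain_const:
  assumes "m \<ge> 1"
  shows "I_chain m (\<lambda>k. a) (\<lambda>k. b) = 2*(real m - 1)*a*b"
proof -
  obtain m' where m: "m = Suc m'" using assms by (cases m) auto
  have "I_chain m (\<lambda>k. a) (\<lambda>k. b) = (\<Sum>i<m'. 2*a*b) + 0"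
    unfolding I_chain_def m sum.lessThan_Suc
    by (rule arg_cong2[where f="(+)"], rule sum.cong) (auto simp: Aidx_def)
  then show ?thesis using m by simp
qed

lemma sum_alt: "(\<Sum>j<2*n. f ((-1::real)^j)) = real n * (f 1 + f (-1))"
  by (induction n) (auto simp: algebra_simps)

lemma ic: assumes "m \<ge> 1" "\<forall>k<m. A k = A' k" "\<forall>k<m. B k = B' k"
  shows "I_chain m A B = I_chain m A' B'"
  unfolding I_chain_def
proof (rule sum.cong[OF refl])
  fix i assume i: "i \<in> {..<m}"
  have a: "Aidx m A k = Aidx m A' k" if "-1 \<le> k" "k < int m" for k
    unfolding Aidx_def using assms that by (auto simp: nat_less_iff)
  show "Aidx m A (int m - int i - 2) * B i + Aidx m A (int m - int i - 1) * B i =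
        Aidx m A' (int m - int i - 2) * B' i + Aidx m A' (int m - int i - 1) * B' i"
    using a[of "int m - int i - 2"] a[of "int m - int i - 1"] i assms by auto
qed

theorem mainTheorem9:
  fixes m n :: nat and \<epsilon> :: real
  assumes "m \<ge> 2" and "n \<ge> 2" and "even n"
  shows "Min {I_chain_ring m n \<epsilon> M | M. pm1_assignment m n M}
           = - 4 * real n * (real m - 1) * max 1 \<bar>\<epsilon>\<bar>"
proof -
  define w where "w j = 1 + (-1)^j * \<epsilon>" for j :: nat
  define V where "V = - 4 * real n * (real m - 1) * max 1 \<bar>\<epsilon>\<bar>"
  have m1: "m \<ge> 1" using assms by simp
  have ab: "\<bar>1+\<epsilon>\<bar> + \<bar>1-\<epsilon>\<bar> = 2 * max 1 \<bar>\<epsilon>\<bar>" by (simp add: max_def abs_if split: if_splits)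
  have sumw: "(\<Sum>j<2*n. \<bar>w j\<bar> * (2*(real m - 1))) = - V"
  proof -
    have "(\<Sum>j<2*n. \<bar>w j\<bar> * (2*(real m - 1))) = real n * (\<bar>1+\<epsilon>\<bar> * (2*(real m - 1)) + \<bar>1-\<epsilon>\<bar> * (2*(real m - 1)))"
      unfolding w_def using sum_alt[of "\<lambda>s. \<bar>1 + s*\<epsilon>\<bar> * (2*(real m - 1))" n] by simp
    also have "\<dots> = real n * (2*(real m - 1)) * (\<bar>1+\<epsilon>\<bar> + \<bar>1-\<epsilon>\<bar>)" by (simp add: algebra_simps)
    also have "\<dots> = real n * (2*(real m - 1)) * (2 * max 1 \<bar>\<epsilon>\<bar>)"
      using ab by (simp only:)
    also have "\<dots> = - V" unfolding V_def by simp
    finally show ?thesis .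
  qed
  let ?S = "{I_chain_ring m n \<epsilon> M | M. pm1_assignment m n M}"
  have lower: "V \<le> y" if "y \<in> ?S" for y
  proof -
    obtain M where y: "y = I_chain_ring m n \<epsilon> M" and pm: "pm1_assignment m n M" using \<open>y \<in> ?S\<close> by auto
    have "w j * I_chain m (M j) (M ((j + 1) mod (2*n))) \<ge> - (\<bar>w j\<bar> * (2*(real m - 1)))" if "j < 2*n" for j
    proof -
      have jj: "(j+1) mod (2*n) < 2*n" using assms by simp
      have b: "\<bar>I_chain m (M j) (M ((j + 1) mod (2*n)))\<bar> \<le> 2*(real m - 1)"
        using chain_abs[OF m1, of "M j" "M ((j + 1) mod (2*n))"] pm that jj unfolding pm1_assignment_def by simp
      have "- (\<bar>w j\<bar> * (2*(real m - 1))) \<le> - (\<bar>w j\<bar> * \<bar>I_chain m (M j) (M ((j + 1) mod (2*n)))\<bar>)"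
        using b by (simp add: mult_left_mono)
      also have "\<dots> \<le> w j * I_chain m (M j) (M ((j + 1) mod (2*n)))"
        using abs_ge_minus_self[of "w j * I_chain m (M j) (M ((j + 1) mod (2*n)))"] by (simp add: abs_mult)
      finally show ?thesis .
    qed
    then have "(\<Sum>j<2*n. - (\<bar>w j\<bar> * (2*(real m - 1)))) \<le> y"
      unfolding y I_chain_ring_def w_def by (intro sum_mono) auto
    then show ?thesis using sumw by (simp add: sum_negf)
  qed
  define c where "c j = (if \<bar>\<epsilon>\<bar> \<le> 1 then (-1)^j else if \<epsilon> > 1 then
      (if j mod 4 = 0 \<or> j mod 4 = 3 then 1 else -1) else (if j mod 4 < 2 then 1 else (-1::real)))" for j :: nat
  have cpm: "c j \<in> {-1,1}" for j unfolding c_def by (cases "even j") auto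
  have ev4: "(-1::real)^j = (if j mod 4 = 0 \<or> j mod 4 = 2 then 1 else -1)" for j
  proof -
    have "even j \<longleftrightarrow> (j mod 4 = 0 \<or> j mod 4 = 2)" by presburger
    then show ?thesis by (simp add: minus_one_power_iff)
  qed
  have suc4: "Suc j mod 4 = (if j mod 4 = 3 then 0 else Suc (j mod 4))" for j
    by (simp add: mod_Suc)
  have key: "w j * (c j * c (Suc j)) = - \<bar>w j\<bar>" for j
  proof (cases "\<bar>\<epsilon>\<bar> \<le> 1")
    case True
    have "w j \<ge> 0" unfolding w_def using True
      by (cases "even j") (auto simp: abs_le_iff)
    then show ?thesis using True unfolding c_def by simp
  next
    case False
    have "j mod 4 < 4" by simp
    then have "j mod 4 = 0 \<or> j mod 4 = 1 \<or> j mod 4 = 2 \<or> j mod 4 = 3" by linarith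
    moreover have "\<epsilon> > 1 \<or> \<epsilon> < -1" using False by linarith
    ultimately show ?thesis unfolding c_def w_def
      by (elim disjE) (simp_all add: ev4 suc4)
  qed
  have c2n: "c (2*n) = c 0"
  proof -
    have "(2*n) mod 4 = 0" using \<open>even n\<close> by presburger
    then show ?thesis unfolding c_def by simp
  qed
  have cmod: "c ((j+1) mod (2*n)) = c (Suc j)" if "j < 2*n" for j
  proof (cases "j + 1 < 2*n")
    case True then show ?thesis by simp
  next
    case False then have "j + 1 = 2*n" using that by simp
    then show ?thesis using c2n by simp
  qed
  define M0 where "M0 = (\<lambda>(j::nat) (k::nat). c j)"
  have pm0: "pm1_assignment m n M0" unfolding pm1_assignment_def M0_def using cpm by auto
  have "I_chain_ring m n \<epsilon> M0 = (\<Sum>j<2*n. - (\<bar>w j\<bar> * (2*(real m - 1))))"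
    unfolding I_chain_ring_def M0_def
  proof (rule sum.cong)
    fix j assume "j \<in> {..<2*n}"
    then have "c ((j+1) mod (2*n)) = c (Suc j)" using cmod by simp
    then have "(1 + (-1)^j * \<epsilon>) * I_chain m (\<lambda>k. c j) (\<lambda>k. c ((j + 1) mod (2*n)))
        = 2*(real m - 1) * (w j * (c j * c (Suc j)))"
      unfolding chain_const[OF m1] w_def by (simp only: mult_ac)
    also have "\<dots> = - (\<bar>w j\<bar> * (2*(real m - 1)))" using key[of j] by simp
    finally show "(1 + (-1)^j * \<epsilon>) * I_chain m (\<lambda>k. c j) (\<lambda>k. c ((j + 1) mod (2*n))) =
       - (\<bar>w j\<bar> * (2*(real m - 1)))" .
  qed simp
  then have M0V: "I_chain_ring m n \<epsilon> M0 = V" using sumw by (simp add: sum_negf)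
  have VS: "V \<in> ?S" by (rule CollectI, rule exI[of _ M0]) (simp add: M0V pm0)
  have cong: "I_chain_ring m n \<epsilon> M = I_chain_ring m n \<epsilon> M'"
    if "\<And>j k. j < 2*n \<Longrightarrow> k < m \<Longrightarrow> M j k = M' j k" for M M'
  proof -
    show ?thesis unfolding I_chain_ring_def
    proof (rule sum.cong[OF refl])
      fix j assume j: "j \<in> {..<2*n}"
      have jj: "(j+1) mod (2*n) < 2*n" using assms by simp
      have "I_chain m (M j) (M ((j + 1) mod (2 * n))) = I_chain m (M' j) (M' ((j + 1) mod (2 * n)))"
        by (rule ic[OF m1]) (use that j jj in auto)
      then show "(1 + (- 1) ^ j * \<epsilon>) * I_chain m (M j) (M ((j + 1) mod (2 * n))) =
         (1 + (- 1) ^ j * \<epsilon>) * I_chain m (M' j) (M' ((j + 1) mod (2 * n)))" by simp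
    qed
  qed
  define R where "R M = (\<lambda>(j::nat) (k::nat). if j < 2*n \<and> k < m then M j k else undefined)" for M :: "nat \<Rightarrow> nat \<Rightarrow> real"
  have fin: "finite ?S"
  proof -
    have "?S \<subseteq> (\<lambda>g. I_chain_ring m n \<epsilon> (curry g)) ` (PiE ({..<2*n} \<times> {..<m}) (\<lambda>_. {-1,1}))"
    proof
      fix y assume "y \<in> ?S"
      then obtain M where y: "y = I_chain_ring m n \<epsilon> M" and pm: "pm1_assignment m n M" by auto
      define g where "g = (\<lambda>(j,k). if j < 2*n \<and> k < m then M j k else undefined)"
      have gP: "g \<in> PiE ({..<2*n} \<times> {..<m}) (\<lambda>_. {-1,1})"
        using pm unfolding g_def pm1_assignment_def PiE_def Pi_def extensional_def by auto
      have yg: "y = I_chain_ring m n \<epsilon> (curry g)"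
        unfolding y by (rule cong) (simp add: g_def)
      show "y \<in> (\<lambda>g. I_chain_ring m n \<epsilon> (curry g)) ` (PiE ({..<2*n} \<times> {..<m}) (\<lambda>_. {-1,1}))"
        by (rule image_eqI[where f="\<lambda>g. I_chain_ring m n \<epsilon> (curry g)", OF yg gP])
    qed
    moreover have "finite (PiE ({..<2*n} \<times> {..<m}) (\<lambda>_. {-1::real,1}))"
      by (intro finite_PiE) auto
    ultimately show ?thesis by (meson finite_subset finite_imageI)
  qed
  have "Min ?S = V" by (rule Min_eqI[OF fin lower VS])
  then show ?thesis unfolding V_def .
qed

end
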